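(* Suppose $m\ge n\ge 2$. If $P_1,\dots,P_\ell$ are deterministic perfect channels from $\{1,\dots,m\}$ to $\{1,\dots,n\}$ such that at least one column of $P_1+\cdots+P_\ell$ has no entry equal to $\ell$, then $\{P_1,\dots,P_\ell\}$ is not $\mathcal{I}$-minimized.
   Context: Channels from $\{1,\dots,m\}$ to $\{1,\dots,n\}$ are $m\times n$ row-stochastic matrices; $\mathcal{D}$ is the set of deterministic (0-1) channels, $\mathrm{rank}(D)$ the matrix rank. A deterministic perfect channel is a deterministic channel of rank $\min(m,n)$. For a channel $W$, $\Lambda(W)=\{\lambda\text{ probability distribution on }\mathcal{D}: W=\sum_D\lambda_DD\}$, $C_{11}(\lambda)=\sum_D\lambda_D\log_2\mathrm{rank}(D)$, $\underline{C}_{11}(W)=\inf_{\lambda\in\Lambda(W)}C_{11}(\lambda)$. A subset $S\subseteq\mathcal{D}$ is $\mathcal{I}$-minimized if there is a probability distribution $\lambda$ on $\mathcal{D}$ with $\mathrm{supp}(\lambda)=S$ and $C_{11}(\lambda)=\underline{C}_{11}(W)$ where $W=\sum_D\lambda_DD$. *)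

theory Defs
  imports "HOL-Analysis.Analysis"
begin

text \<open>Channels from {1..m} to {1..n} are m x n real matrices, rendered as
  real^'n^'m with finite index types 'm (rows/inputs) and 'n (columns/outputs),
  m = CARD('m), n = CARD('n).\<close>

definition channel :: "real^'n^'m \<Rightarrow> bool" where
  "channel W \<longleftrightarrow> (\<forall>i j. W $ i $ j \<ge> 0) \<and> (\<forall>i. (\<Sum>j\<in>UNIV. W $ i $ j) = 1)"

definition det_channels :: "(real^'n^'m) set" where
  "det_channels = {D. channel D \<and> (\<forall>i j. D $ i $ j = 0 \<or> D $ i $ j = 1)}"

definition det_perfect :: "real^'n^'m \<Rightarrow> bool" where
  "det_perfect D \<longleftrightarrow> D \<in> det_channels \<and> rank D = min CARD('m) CARD('n)"

definition is_dist :: "(real^'n^'m \<Rightarrow> real) \<Rightarrow> bool" where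
  "is_dist p \<longleftrightarrow> (\<forall>D. p D \<ge> 0) \<and> (\<forall>D. D \<notin> det_channels \<longrightarrow> p D = 0)
     \<and> (\<Sum>D\<in>det_channels. p D) = 1"

definition mix :: "(real^'n^'m \<Rightarrow> real) \<Rightarrow> real^'n^'m" where
  "mix p = (\<Sum>D\<in>det_channels. p D *\<^sub>R D)"

definition Lambda :: "real^'n^'m \<Rightarrow> (real^'n^'m \<Rightarrow> real) set" where
  "Lambda W = {p. is_dist p \<and> W = mix p}"

definition C11 :: "(real^'n^'m \<Rightarrow> real) \<Rightarrow> real" where
  "C11 p = (\<Sum>D\<in>det_channels. p D * log 2 (real (rank D)))"

definition C11_lower :: "real^'n^'m \<Rightarrow> real" where
  "C11_lower W = Inf (C11 ` Lambda W)"

definition supp :: "(real^'n^'m \<Rightarrow> real) \<Rightarrow> (real^'n^'m) set" where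
  "supp p = {D. p D \<noteq> 0}"

definition I_minimized :: "(real^'n^'m) set \<Rightarrow> bool" where
  "I_minimized S \<longleftrightarrow> S \<subseteq> det_channels \<and>
     (\<exists>p. is_dist p \<and> supp p = S \<and> C11 p = C11_lower (mix p))"

end

theory Submission
  imports Defs
begin

definition Dm :: "('m \<Rightarrow> 'n) \<Rightarrow> real^'n^'m" where
  "Dm f = (\<chi> i j. if f i = j then 1 else 0)"

lemma Dm_nth[simp]: "Dm f $ i $ j = (if f i = j then 1 else 0)"
  by (simp add: Dm_def)

lemma Dm_det: "Dm f \<in> det_channels"
  unfolding det_channels_def channel_def by simp

lemma Dm_inj: "inj Dm"
proof
  fix f g :: "'a \<Rightarrow> 'b" assume "Dm f = Dm g"
  then have "\<And>i. Dm f $ i $ f i = Dm g $ i $ f i" by simp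
  then have "\<And>i. g i = f i" by (metis (full_types) Dm_nth zero_neq_one)
  then show "f = g" by (simp add: fun_eq_iff)
qed

lemma det_range: "det_channels = range Dm"
proof
  show "range Dm \<subseteq> det_channels" using Dm_det by blast
  show "det_channels \<subseteq> range Dm"
  proof
    fix D :: "real^'n^'m" assume D: "D \<in> det_channels"
    have nn: "\<And>i j. D $ i $ j \<ge> 0" and s1: "\<And>i. (\<Sum>j\<in>UNIV. D $ i $ j) = 1"
      and b: "\<And>i j. D $ i $ j = 0 \<or> D $ i $ j = 1"
      using D unfolding det_channels_def channel_def by auto
    have ex: "\<exists>j. D $ i $ j = 1" for i
    proof (rule ccontr)
      assume "\<not> ?thesis"
      then have "\<forall>j. D $ i $ j = 0" using b by blast
      then show False using s1[of i] by simp
    qed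
    define f where "f i = (SOME j. D $ i $ j = 1)" for i
    have f1: "D $ i $ f i = 1" for i unfolding f_def using ex by (rule someI_ex)
    have "D = Dm f"
    proof (intro vec_eq_iff[THEN iffD2] allI)
      fix i j
      show "D $ i $ j = Dm f $ i $ j"
      proof (cases "f i = j")
        case True then show ?thesis using f1 by auto
      next
        case False
        have "(\<Sum>j\<in>{j, f i}. D $ i $ j) \<le> (\<Sum>j\<in>UNIV. D $ i $ j)"
          by (rule sum_mono2) (auto simp: nn)
        then have "D $ i $ j + 1 \<le> 1" using False f1 s1[of i] by simp
        then have "D $ i $ j = 0" using b[of i j] by auto
        then show ?thesis using False by simp
      qed
    qed
    then show "D \<in> range Dm" by blast
  qed
qed

lemma finite_det: "finite (det_channels :: (real^'n^'m) set)"
  unfolding det_range by simp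

lemma sum_det: "(\<Sum>D\<in>det_channels. g D) = (\<Sum>f\<in>UNIV. g (Dm f))"
  unfolding det_range by (simp add: sum.reindex[OF Dm_inj])

lemma prod_sum_fun:
  fixes h :: "'a::finite \<Rightarrow> 'b::finite \<Rightarrow> real"
  shows "(\<Sum>f\<in>UNIV. \<Prod>i\<in>UNIV. h i (f i)) = (\<Prod>i\<in>UNIV. \<Sum>j\<in>UNIV. h i j)"
  using prod_sum_PiE[of "UNIV::'a set" "\<lambda>_. UNIV::'b set" h] by simp

lemma log_nat_nonneg: "log 2 (real k) \<ge> 0"
  by (cases "k = 0") (auto simp: log_def)

lemma rank_Dm_pos: "rank (Dm f) \<ge> 1"
proof -
  have "Dm f \<noteq> 0"
  proof
    assume "Dm f = 0"
    then have "Dm f $ i $ f i = 0" for i by simp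
    then show False by simp
  qed
  then show ?thesis using rank_eq_0 by (metis less_one not_le)
qed

lemma rank_zero_col:
  fixes A :: "real^'n^'m"
  assumes "\<forall>i. A $ i $ j = 0"
  shows "rank A \<le> CARD('n) - 1"
proof -
  have cj: "column j A = 0" using assms by (simp add: column_def vec_eq_iff)
  have "columns A \<subseteq> span ((\<lambda>k. column k A) ` (UNIV - {j}))"
  proof
    fix x assume "x \<in> columns A"
    then obtain k where k: "x = column k A" by (auto simp: columns_def)
    show "x \<in> span ((\<lambda>k. column k A) ` (UNIV - {j}))"
    proof (cases "k = j")
      case True then show ?thesis using k cj by (simp add: span_zero)
    next
      case False then show ?thesis using k by (intro span_base) auto
    qed
  qed
  then have "dim (columns A) \<le> card ((\<lambda>k. column k A) ` (UNIV - {j}))"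
    by (intro dim_le_card) auto
  also have "\<dots> \<le> card (UNIV - {j})" by (rule card_image_le) simp
  also have "\<dots> = CARD('n) - 1" by (simp add: card_Diff_singleton)
  finally show ?thesis by (simp add: column_rank_def)
qed

lemma C11_nonneg: "is_dist r \<Longrightarrow> C11 r \<ge> 0"
  unfolding C11_def is_dist_def
  by (intro sum_nonneg mult_nonneg_nonneg log_nat_nonneg) auto

theorem proposition5:
  fixes P :: "nat \<Rightarrow> real^'n^'m" and l :: nat
  assumes "CARD('m) \<ge> CARD('n)" and "CARD('n) \<ge> 2"
    and "\<forall>k\<in>{1..l}. det_perfect (P k)"
    and "\<exists>j. \<forall>i. (\<Sum>k=1..l. P k $ i $ j) \<noteq> real l"
  shows "\<not> I_minimized (P ` {1..l})"
proof
  assume "I_minimized (P ` {1..l})"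
  then obtain p where pd: "is_dist p" and sp: "supp p = P ` {1..l}"
    and pmin: "C11 p = C11_lower (mix p)" unfolding I_minimized_def by blast
  obtain j0 where j0: "\<forall>i. (\<Sum>k=1..l. P k $ i $ j0) \<noteq> real l" using assms(4) by blast
  define n where "n = CARD('n)"
  have rkP: "rank D = n" if "p D \<noteq> 0" for D
  proof -
    have "D \<in> P ` {1..l}" using that sp by (auto simp: supp_def)
    then have "det_perfect D" using assms(3) by auto
    then show ?thesis using assms(1) unfolding det_perfect_def n_def by simp
  qed
  have pnn: "\<And>D. p D \<ge> 0" and pout: "\<And>D. D \<notin> det_channels \<Longrightarrow> p D = 0"
    and psum: "(\<Sum>D\<in>det_channels. p D) = 1" using pd unfolding is_dist_def by auto
  have detnn: "\<And>D i j. D \<in> det_channels \<Longrightarrow> D $ i $ j \<ge> 0"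
    and detle: "\<And>D i j. D \<in> det_channels \<Longrightarrow> D $ i $ j \<le> 1"
    and detrow: "\<And>D i. D \<in> det_channels \<Longrightarrow> (\<Sum>j\<in>UNIV. D $ i $ j) = 1"
    unfolding det_channels_def channel_def by (auto, metis order.refl zero_le_one)
  have C11p: "C11 p = log 2 n"
  proof -
    have "C11 p = (\<Sum>D\<in>det_channels. p D * log 2 n)"
      unfolding C11_def by (intro sum.cong refl) (metis mult_zero_left rkP)
    also have "\<dots> = log 2 n" using psum by (simp add: sum_distrib_right[symmetric])
    finally show ?thesis .
  qed
  define W where "W = mix p"
  have Wij: "W $ i $ j = (\<Sum>D\<in>det_channels. p D * D $ i $ j)" for i j
    unfolding W_def mix_def by simp
  have Wnn: "W $ i $ j \<ge> 0" for i j
    unfolding Wij by (intro sum_nonneg mult_nonneg_nonneg pnn detnn)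
  have Wrow: "(\<Sum>j\<in>UNIV. W $ i $ j) = 1" for i
  proof -
    have "(\<Sum>j\<in>UNIV. W $ i $ j) = (\<Sum>D\<in>det_channels. p D * (\<Sum>j\<in>UNIV. D $ i $ j))"
      unfolding Wij by (simp add: sum_distrib_left sum.swap[of _ UNIV])
    also have "\<dots> = (\<Sum>D\<in>det_channels. p D)" using detrow by (intro sum.cong) auto
    also have "\<dots> = 1" by (rule psum)
    finally show ?thesis .
  qed
  have Wlt: "W $ i $ j0 < 1" for i
  proof -
    have "\<exists>k\<in>{1..l}. P k $ i $ j0 \<noteq> 1"
    proof (rule ccontr)
      assume "\<not> ?thesis"
      then have "(\<Sum>k=1..l. P k $ i $ j0) = (\<Sum>k=1..l. 1)" by (intro sum.cong) auto
      then show False using j0 by simp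
    qed
    then obtain k where k: "k \<in> {1..l}" "P k $ i $ j0 \<noteq> 1" by blast
    define D0 where "D0 = P k"
    have D0det: "D0 \<in> det_channels" using assms(3) k unfolding D0_def det_perfect_def by auto
    have D0z: "D0 $ i $ j0 = 0" using D0det k unfolding D0_def det_channels_def by auto
    have "p D0 \<noteq> 0" using sp k unfolding supp_def D0_def by auto
    then have pD0: "p D0 > 0" using pnn[of D0] by simp
    have "W $ i $ j0 = (\<Sum>D\<in>det_channels - {D0}. p D * D $ i $ j0)"
      unfolding Wij using D0z by (simp add: sum.remove[OF finite_det D0det])
    also have "\<dots> \<le> (\<Sum>D\<in>det_channels - {D0}. p D)"
      by (intro sum_mono) (metis DiffD1 detle mult_left_le pnn)
    also have "\<dots> = 1 - p D0" using psum sum.remove[OF finite_det D0det, of p] by simp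
    finally show ?thesis using pD0 by simp
  qed
  define q where "q D = (if D \<in> det_channels then \<Prod>i\<in>UNIV. \<Sum>j\<in>UNIV. D $ i $ j * W $ i $ j else 0)" for D
  have qDm: "q (Dm f) = (\<Prod>i\<in>UNIV. W $ i $ f i)" for f
  proof -
    have "(\<Sum>j\<in>UNIV. Dm f $ i $ j * W $ i $ j) = W $ i $ f i" for i
    proof -
      have "(\<Sum>j\<in>UNIV. Dm f $ i $ j * W $ i $ j) = (\<Sum>j\<in>UNIV. if f i = j then W $ i $ j else 0)"
        by (intro sum.cong refl) simp
      then show ?thesis by simp
    qed
    moreover have "Dm f \<in> det_channels" by (rule Dm_det)
    ultimately show ?thesis unfolding q_def by presburger
  qed
  have qsum: "(\<Sum>D\<in>det_channels. q D) = 1"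
    unfolding sum_det qDm using prod_sum_fun[of "\<lambda>i j. W $ i $ j"] by (simp add: Wrow)
  have qd: "is_dist q"
    unfolding is_dist_def
  proof (intro conjI allI impI qsum)
    fix D show "q D \<ge> 0" unfolding q_def
      by (auto intro!: prod_nonneg sum_nonneg mult_nonneg_nonneg detnn Wnn)
  next
    fix D :: "real^'n^'m" assume "D \<notin> det_channels" then show "q D = 0" by (simp add: q_def)
  qed
  have qmix: "mix q = W"
  proof (intro vec_eq_iff[THEN iffD2] allI)
    fix a b
    define h where "h i j = (if i = a then (if j = b then W $ a $ b else 0) else W $ i $ j)" for i j
    have "mix q $ a $ b = (\<Sum>f\<in>UNIV. q (Dm f) * Dm f $ a $ b)"
      unfolding mix_def by (simp add: sum_det)
    also have "\<dots> = (\<Sum>f\<in>UNIV. \<Prod>i\<in>UNIV. h i (f i))"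
    proof (intro sum.cong refl)
      fix f :: "'m \<Rightarrow> 'n"
      have "(\<Prod>i\<in>UNIV. h i (f i)) = (\<Prod>i\<in>UNIV. W $ i $ f i * (if i = a then (if f a = b then 1 else 0) else 1))"
        unfolding h_def by (intro prod.cong refl) auto
      also have "\<dots> = (\<Prod>i\<in>UNIV. W $ i $ f i) * (if f a = b then 1 else 0)"
        by (simp add: prod.distrib prod.If_cases)
      finally show "q (Dm f) * Dm f $ a $ b = (\<Prod>i\<in>UNIV. h i (f i))" by (simp add: qDm)
    qed
    also have "\<dots> = (\<Prod>i\<in>UNIV. \<Sum>j\<in>UNIV. h i j)" by (rule prod_sum_fun)
    also have "\<dots> = (\<Prod>i\<in>UNIV. if i = a then W $ a $ b else 1)"
      by (intro prod.cong refl) (simp add: h_def Wrow)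
    also have "\<dots> = W $ a $ b" by simp
    finally show "mix q $ a $ b = W $ a $ b" .
  qed
  have qL: "q \<in> Lambda W" unfolding Lambda_def using qd qmix by simp
  define c where "c = (\<Prod>i\<in>UNIV. 1 - W $ i $ j0)"
  have cpos: "c > 0" unfolding c_def using Wlt by (intro prod_pos) auto
  define ind where "ind f = (if \<forall>i. f i \<noteq> j0 then 1 else (0::real))" for f :: "'m \<Rightarrow> 'n"
  have csum: "(\<Sum>f\<in>UNIV. (\<Prod>i\<in>UNIV. W $ i $ f i) * ind f) = c"
  proof -
    define h where "h i j = (if j = j0 then 0 else W $ i $ j)" for i j
    have "(\<Sum>f\<in>UNIV. (\<Prod>i\<in>UNIV. W $ i $ f i) * ind f) = (\<Sum>f\<in>UNIV. \<Prod>i\<in>UNIV. h i (f i))"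
    proof (intro sum.cong refl)
      fix f :: "'m \<Rightarrow> 'n"
      show "(\<Prod>i\<in>UNIV. W $ i $ f i) * ind f = (\<Prod>i\<in>UNIV. h i (f i))"
      proof (cases "\<forall>i. f i \<noteq> j0")
        case True then show ?thesis by (simp add: ind_def h_def)
      next
        case False
        then obtain i0 where "f i0 = j0" by blast
        then have "(\<Prod>i\<in>UNIV. h i (f i)) = 0" by (intro prod_zero) (auto simp: h_def)
        moreover have "ind f = 0" using False by (simp add: ind_def)
        ultimately show ?thesis by simp
      qed
    qed
    also have "\<dots> = (\<Prod>i\<in>UNIV. \<Sum>j\<in>UNIV. h i j)" by (rule prod_sum_fun)
    also have "\<dots> = c" unfolding c_def
    proof (intro prod.cong refl)
      fix i
      have "(\<Sum>j\<in>UNIV. h i j) = (\<Sum>j\<in>UNIV. W $ i $ j - (if j = j0 then W $ i $ j else 0))"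
        by (intro sum.cong refl) (simp add: h_def)
      also have "\<dots> = 1 - W $ i $ j0" by (simp add: sum_subtractf Wrow)
      finally show "(\<Sum>j\<in>UNIV. h i j) = 1 - W $ i $ j0" .
    qed
    finally show ?thesis .
  qed
  define \<delta> where "\<delta> = log 2 n - log 2 (real n - 1)"
  have n2: "n \<ge> 2" using assms(2) n_def by simp
  have dpos: "\<delta> > 0" unfolding \<delta>_def using n2 by simp
  have Lb: "log 2 (real (rank (Dm f))) \<le> log 2 n - \<delta> * ind f" for f
  proof -
    have r1: "real (rank (Dm f)) \<ge> 1" using rank_Dm_pos[of f] by simp
    show ?thesis
    proof (cases "\<forall>i. f i \<noteq> j0")
      case True
      then have "rank (Dm f) \<le> n - 1" unfolding n_def by (intro rank_zero_col) auto
      then have "real (rank (Dm f)) \<le> real n - 1" using n2 by linarith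
      then have "log 2 (real (rank (Dm f))) \<le> log 2 (real n - 1)" using r1 by simp
      then show ?thesis using True by (simp add: ind_def \<delta>_def)
    next
      case False
      have "rank (Dm f) \<le> n" using rank_bound[of "Dm f"] assms(1) unfolding n_def by simp
      then have "log 2 (real (rank (Dm f))) \<le> log 2 n" using r1 by simp
      moreover have "ind f = 0" using False by (simp add: ind_def)
      ultimately show ?thesis by simp
    qed
  qed
  have "C11 q = (\<Sum>f\<in>UNIV. (\<Prod>i\<in>UNIV. W $ i $ f i) * log 2 (real (rank (Dm f))))"
    unfolding C11_def sum_det qDm ..
  also have "\<dots> \<le> (\<Sum>f\<in>UNIV. (\<Prod>i\<in>UNIV. W $ i $ f i) * (log 2 n - \<delta> * ind f))"
    by (intro sum_mono mult_left_mono Lb prod_nonneg Wnn)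
  also have "\<dots> = log 2 n * (\<Sum>f\<in>UNIV. \<Prod>i\<in>UNIV. W $ i $ f i)
      - \<delta> * (\<Sum>f\<in>UNIV. (\<Prod>i\<in>UNIV. W $ i $ f i) * ind f)"
    by (simp add: algebra_simps sum_subtractf sum_distrib_left)
  also have "\<dots> = log 2 n - \<delta> * c" using qsum unfolding sum_det qDm by (simp only: csum)
  finally have le: "C11 q \<le> log 2 n - \<delta> * c" .
  have "\<delta> * c > 0" using dpos cpos by simp
  then have "C11 q < log 2 n" using le by linarith
  moreover have "C11_lower W \<le> C11 q"
    unfolding C11_lower_def using qL
    by (intro cInf_lower) (auto simp: bdd_below_def Lambda_def intro!: exI[of _ 0] C11_nonneg)
  ultimately show False using pmin C11p W_def by simp
qed

end
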